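(* Let $\mathcal A,\mathcal B>0$, $\alpha,\beta\in(0,1)$, $h,\tau>0$, and for a real number $\theta$ let $s=\sin^2(\theta h/2)$, $$\mathcal Q=\Big[1-\tfrac{8}{45}s^2\Big]+4g_0^{(\alpha,\beta)}s\Big[1+\tfrac13 s\Big],\qquad \mathcal P=\Big[1-\tfrac{8}{45}s^2\Big]-4g_1^{(\alpha,\beta)}s\Big[1+\tfrac13 s\Big].$$ Then $\left|\mathcal P/\mathcal Q\right|\le1$ for every real $\theta$.
   Context: $\varpi_\ell^{(\sigma)}=(-1)^\ell\binom{\sigma}{\ell}$, $g_0^{(\sigma)}=\frac{1+\sigma}{2}\varpi_0^{(\sigma)}$, $g_\ell^{(\sigma)}=\frac{1+\sigma}{2}\varpi_\ell^{(\sigma)}+\frac{1-\sigma}{2}\varpi_{\ell-1}^{(\sigma)}$ ($\ell\ge1$); $\mu_\alpha=\tau^\alpha\mathcal A/h^2$, $\mu_\beta=\tau^\beta\mathcal B/h^2$, $g_\ell^{(\alpha,\beta)}=\mu_\alpha g_\ell^{(1-\alpha)}+\mu_\beta g_\ell^{(1-\beta)}$. *)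

theory Defs
  imports Complex_Main
begin

definition varpi :: "real \<Rightarrow> nat \<Rightarrow> real" where
  "varpi \<sigma> l = (-1) ^ l * (\<sigma> gchoose l)"

definition gw :: "real \<Rightarrow> nat \<Rightarrow> real" where
  "gw \<sigma> l = (if l = 0 then (1 + \<sigma>) / 2 * varpi \<sigma> 0
              else (1 + \<sigma>) / 2 * varpi \<sigma> l + (1 - \<sigma>) / 2 * varpi \<sigma> (l - 1))"

definition gab :: "real \<Rightarrow> real \<Rightarrow> real \<Rightarrow> real \<Rightarrow> real \<Rightarrow> real \<Rightarrow> nat \<Rightarrow> real" where
  "gab A B \<alpha> \<beta> h \<tau> l =
     (\<tau> powr \<alpha> * A / h^2) * gw (1 - \<alpha>) l + (\<tau> powr \<beta> * B / h^2) * gw (1 - \<beta>) l"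

end

theory Submission
  imports Defs
begin

lemma gw0: "gw s 0 = (1 + s)/2" by (simp add: gw_def varpi_def)
lemma gw1: "gw s 1 = (1 - 2*s - s^2)/2"
  by (simp add: gw_def varpi_def gbinomial_1 field_simps power2_eq_square)

theorem lemma5:
  fixes A B \<alpha> \<beta> h \<tau> \<theta> :: real
  assumes "A > 0" "B > 0" "0 < \<alpha>" "\<alpha> < 1" "0 < \<beta>" "\<beta> < 1" "h > 0" "\<tau> > 0"
  shows "let s = (sin (\<theta> * h / 2))^2;
             Q = (1 - 8/45 * s^2) + 4 * gab A B \<alpha> \<beta> h \<tau> 0 * s * (1 + s/3);
             P = (1 - 8/45 * s^2) - 4 * gab A B \<alpha> \<beta> h \<tau> 1 * s * (1 + s/3)
         in \<bar>P / Q\<bar> \<le> 1"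
proof -
  define s where "s = (sin (\<theta> * h / 2))^2"
  define ma where "ma = \<tau> powr \<alpha> * A / h^2"
  define mb where "mb = \<tau> powr \<beta> * B / h^2"
  have ma: "ma > 0" unfolding ma_def using assms by simp
  have mb: "mb > 0" unfolding mb_def using assms by simp
  have s0: "0 \<le> s" and s1: "s \<le> 1" unfolding s_def
    by (simp_all add: abs_square_le_1)
  define a where "a = 1 - 8/45 * s^2"
  define b where "b = 4 * s * (1 + s/3)"
  have "s^2 \<le> 1" using s0 s1 by (simp add: power_le_one)
  hence a: "a > 0" unfolding a_def by simp
  have b: "b \<ge> 0" unfolding b_def using s0 by simp
  define G0 where "G0 = gab A B \<alpha> \<beta> h \<tau> 0"
  define G1 where "G1 = gab A B \<alpha> \<beta> h \<tau> 1"
  have G0: "G0 = ma * ((2 - \<alpha>)/2) + mb * ((2 - \<beta>)/2)"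
    unfolding G0_def gab_def gw0 ma_def mb_def by simp
  have G1: "G1 = ma * ((1 - 2*(1-\<alpha>) - (1-\<alpha>)^2)/2) + mb * ((1 - 2*(1-\<beta>) - (1-\<beta>)^2)/2)"
    unfolding G1_def gab_def gw1 ma_def mb_def by simp
  have g0p: "G0 > 0" unfolding G0 using ma mb assms by (intro add_pos_pos mult_pos_pos) auto
  have sum: "G0 + G1 \<ge> 0"
  proof -
    have "G0 + G1 = ma * (\<alpha>*(3-\<alpha>)/2) + mb * (\<beta>*(3-\<beta>)/2)"
      unfolding G0 G1 by (simp add: field_simps power2_eq_square)
    also have "\<dots> \<ge> 0" using ma mb assms by (intro add_nonneg_nonneg mult_nonneg_nonneg) auto
    finally show ?thesis .
  qed
  have dif: "G0 - G1 \<ge> 0"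
  proof -
    have "G0 - G1 = ma * ((1-\<alpha>)*(4-\<alpha>)/2) + mb * ((1-\<beta>)*(4-\<beta>)/2)"
      unfolding G0 G1 by (simp add: field_simps power2_eq_square)
    also have "\<dots> \<ge> 0" using ma mb assms by (intro add_nonneg_nonneg mult_nonneg_nonneg) auto
    finally show ?thesis .
  qed
  have Q: "a + G0 * b > 0" using a g0p b by (simp add: add_pos_nonneg)
  have 1: "a - G1 * b \<le> a + G0 * b" using mult_nonneg_nonneg[OF sum b] by (simp add: algebra_simps)
  have 2: "-(a - G1 * b) \<le> a + G0 * b" using mult_nonneg_nonneg[OF dif b] a by (simp add: algebra_simps)
  have "\<bar>(a - G1 * b) / (a + G0 * b)\<bar> \<le> 1"
    using Q 1 2 by (simp add: abs_le_iff divide_le_eq_1 abs_divide)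
  moreover have "4 * G1 * s * (1 + s/3) = G1 * b" "4 * G0 * s * (1 + s/3) = G0 * b"
    unfolding b_def by (simp_all add: algebra_simps)
  ultimately have "\<bar>(a - 4 * G1 * s * (1 + s/3)) / (a + 4 * G0 * s * (1 + s/3))\<bar> \<le> 1" by metis
  then show ?thesis unfolding Let_def s_def[symmetric] a_def[symmetric] G0_def[symmetric] G1_def[symmetric]
    by simp
qed

end
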